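(* Let $f:\mathbb{R}^n\to\mathbb{R}$ be continuous with bounded lower-level sets, and let $\gamma_k>0$, $\delta_k>0$, $\gamma_k\delta_k\le c$ for all $k\ge1$ and some $c>0$. Then for every $k$ the optimal set $X_k^*$ of $\min_{x\in\mathbb{R}^n}F_k(x)$ is a nonempty compact set, and for any $\hat x\in X$, $$X_k^*\subseteq\Big\{x\in\mathbb{R}^n: f(x)\le f(\hat x)+\frac{c}{4\alpha_{\min}}\Big\}\quad\text{for all }k.$$ In particular, the sequence of sets $\{X_k^*\}$ is uniformly bounded.
   Context: Let $a_1,\dots,a_m\in\mathbb{R}^n$ be nonzero vectors and $b_1,\dots,b_m\in\mathbb{R}$; $X_i=\{x:\langle a_i,x\rangle-b_i\le0\}$, $X=\bigcap_{i=1}^mX_i$ (assumed nonempty), $\alpha_{\min}=\min_i\|a_i\|$. For $\delta>0$, nonzero $a$ and scalar $b$: $h_\delta(x;a,b)=\frac{\langle a,x\rangle-b}{\|a\|}$ if $\langle a,x\rangle-b>\delta$, $\frac{(\langle a,x\rangle-b+\delta)^2}{4\delta\|a\|}$ if $-\delta\le\langle a,x\rangle-b\le\delta$, $0$ if $\langle a,x\rangle-b<-\delta$. For each $k$, $F_k(x)=f(x)+\frac{\gamma_k}{m}\sum_{i=1}^m h_{\delta_k}(x;a_i,b_i)$, and $X_k^*$ is the set of minimizers of $F_k$ over $\mathbb{R}^n$. *)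

theory Defs
  imports "HOL-Analysis.Analysis"
begin

definition hdelta :: "real \<Rightarrow> real^'n \<Rightarrow> real \<Rightarrow> real^'n \<Rightarrow> real" where
  "hdelta \<delta> a b x =
     (let t = inner a x - b in
      if t > \<delta> then t / norm a
      else if - \<delta> \<le> t then (t + \<delta>)^2 / (4 * \<delta> * norm a)
      else 0)"

definition Fk :: "(real^'n \<Rightarrow> real) \<Rightarrow> nat \<Rightarrow> (nat \<Rightarrow> real^'n) \<Rightarrow> (nat \<Rightarrow> real)
    \<Rightarrow> real \<Rightarrow> real \<Rightarrow> real^'n \<Rightarrow> real" where
  "Fk f m a b \<gamma> \<delta> x = f x + \<gamma> / real m * (\<Sum>i=1..m. hdelta \<delta> (a i) (b i) x)"

definition argmins :: "('a \<Rightarrow> real) \<Rightarrow> 'a set" where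
  "argmins F = {x. \<forall>y. F x \<le> F y}"

end

theory Submission
  imports Defs
begin

lemma h_alt:
  assumes "\<delta> > 0"
  shows "hdelta \<delta> a b x = (min (max (inner a x - b) (-\<delta>)) \<delta> + \<delta>)^2 / (4*\<delta>*norm a)
            + max (inner a x - b - \<delta>) 0 / norm a"
proof -
  define t where "t = inner a x - b"
  have "(if t > \<delta> then t / norm a else if - \<delta> \<le> t then (t + \<delta>)^2 / (4 * \<delta> * norm a) else 0)
     = (min (max t (-\<delta>)) \<delta> + \<delta>)^2 / (4*\<delta>*norm a) + max (t - \<delta>) 0 / norm a"
  proof (cases "t > \<delta>")
    case True
    have "(2*\<delta>)^2 / (4*\<delta>*norm a) = \<delta> / norm a" using assms
      by (simp add: power2_eq_square field_simps)
    then show ?thesis using True by (simp add: min_def max_def diff_divide_distrib)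
  next
    case False
    then show ?thesis using assms by (auto simp: min_def max_def)
  qed
  then show ?thesis unfolding hdelta_def t_def Let_def by simp
qed

lemma h_cont:
  assumes "\<delta> > 0" "a \<noteq> 0"
  shows "continuous_on UNIV (hdelta \<delta> a b)"
proof -
  have "hdelta \<delta> a b = (\<lambda>x. (min (max (inner a x - b) (-\<delta>)) \<delta> + \<delta>)^2 / (4*\<delta>*norm a)
            + max (inner a x - b - \<delta>) 0 / norm a)"
    using h_alt[OF assms(1)] by auto
  moreover have "continuous_on UNIV (\<lambda>x. (min (max (inner a x - b) (-\<delta>)) \<delta> + \<delta>)^2 / (4*\<delta>*norm a)
            + max (inner a x - b - \<delta>) 0 / norm a)"
    using assms by (intro continuous_intros) auto
  ultimately show ?thesis by simp
qed

lemma h_nonneg: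
  assumes "\<delta> > 0"
  shows "hdelta \<delta> a b x \<ge> 0"
  unfolding h_alt[OF assms] using assms by (intro add_nonneg_nonneg divide_nonneg_nonneg) auto

lemma h_feas:
  assumes "\<delta> > 0" "inner a x - b \<le> 0"
  shows "hdelta \<delta> a b x \<le> \<delta> / (4 * norm a)"
proof (cases "- \<delta> \<le> inner a x - b")
  case True
  define t where "t = inner a x - b"
  have t: "-\<delta> \<le> t" "t \<le> 0" using True assms t_def by auto
  have "(t + \<delta>)^2 \<le> \<delta>^2" using t by (intro power_mono) auto
  hence "(t + \<delta>)^2 / (4 * \<delta> * norm a) \<le> \<delta>^2 / (4 * \<delta> * norm a)"
    using assms by (intro divide_right_mono) auto
  also have "\<delta>^2 / (4 * \<delta> * norm a) = \<delta> / (4 * norm a)" using assms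
    by (cases "a = 0") (simp_all add: power2_eq_square field_simps)
  finally show ?thesis using t assms unfolding hdelta_def Let_def t_def by auto
next
  case False
  then show ?thesis using assms unfolding hdelta_def Let_def by auto
qed

lemma argmins_good:
  fixes F f :: "'a::euclidean_space \<Rightarrow> real"
  assumes Fc: "continuous_on UNIV F" and Ff: "\<And>x. f x \<le> F x"
    and lev: "\<And>t. bounded {x. f x \<le> t}"
  shows "argmins F \<noteq> {} \<and> compact (argmins F)"
proof -
  define S where "S = {x. F x \<le> F 0}"
  have "closed S" unfolding S_def
    by (rule closed_Collect_le[OF Fc continuous_on_const])
  moreover have "bounded S" unfolding S_def
    by (rule bounded_subset[OF lev[of "F 0"]]) (use Ff in \<open>force intro: order_trans\<close>)
  ultimately have cS: "compact S" by (simp add: compact_eq_bounded_closed)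
  have "S \<noteq> {}" unfolding S_def by auto
  then obtain z where z: "z \<in> S" "\<And>y. y \<in> S \<Longrightarrow> F z \<le> F y"
    using continuous_attains_inf[OF cS _ continuous_on_subset[OF Fc]] by blast
  have zm: "z \<in> argmins F" unfolding argmins_def
  proof (safe)
    fix y show "F z \<le> F y"
    proof (cases "y \<in> S")
      case True then show ?thesis using z by auto
    next
      case False then show ?thesis using z(1) unfolding S_def by auto
    qed
  qed
  have eq: "argmins F = {x. F x \<le> F z}"
    using zm unfolding argmins_def by (auto intro: order_trans)
  have "closed (argmins F)" unfolding eq
    by (rule closed_Collect_le[OF Fc continuous_on_const])
  moreover have "bounded (argmins F)" unfolding eq
    by (rule bounded_subset[OF lev[of "F z"]]) (use Ff in \<open>force intro: order_trans\<close>)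
  ultimately show ?thesis using zm by (auto simp: compact_eq_bounded_closed)
qed

theorem lemma6:
  fixes f :: "real^'n \<Rightarrow> real"
    and m :: nat
    and a :: "nat \<Rightarrow> real^'n"
    and b :: "nat \<Rightarrow> real"
    and \<gamma> \<delta> :: "nat \<Rightarrow> real"
    and c :: real
  assumes m_pos: "m \<ge> 1"
    and a_nz: "\<And>i. i \<in> {1..m} \<Longrightarrow> a i \<noteq> 0"
    and X_ne: "{x. \<forall>i\<in>{1..m}. inner (a i) x - b i \<le> 0} \<noteq> {}"
    and f_cont: "continuous_on UNIV f"
    and f_lev: "\<And>t. bounded {x. f x \<le> t}"
    and c_pos: "c > 0"
    and \<gamma>_pos: "\<And>k. k \<ge> 1 \<Longrightarrow> \<gamma> k > 0"
    and \<delta>_pos: "\<And>k. k \<ge> 1 \<Longrightarrow> \<delta> k > 0"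
    and \<gamma>\<delta>_le: "\<And>k. k \<ge> 1 \<Longrightarrow> \<gamma> k * \<delta> k \<le> c"
  shows "(\<forall>k\<ge>1. argmins (Fk f m a b (\<gamma> k) (\<delta> k)) \<noteq> {}
                \<and> compact (argmins (Fk f m a b (\<gamma> k) (\<delta> k)))
                \<and> (\<forall>xh\<in>{x. \<forall>i\<in>{1..m}. inner (a i) x - b i \<le> 0}.
                      argmins (Fk f m a b (\<gamma> k) (\<delta> k))
                        \<subseteq> {x. f x \<le> f xh + c / (4 * (MIN i\<in>{1..m}. norm (a i)))}))
         \<and> (\<exists>B. \<forall>k\<ge>1. argmins (Fk f m a b (\<gamma> k) (\<delta> k)) \<subseteq> cball 0 B)"
proof -
  define \<alpha> where "\<alpha> = (MIN i\<in>{1..m}. norm (a i))"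
  have \<alpha>_le: "\<alpha> \<le> norm (a i)" if "i \<in> {1..m}" for i
    unfolding \<alpha>_def using that by (intro Min_le) auto
  have \<alpha>_pos: "\<alpha> > 0" unfolding \<alpha>_def using m_pos a_nz
    by (subst Min_gr_iff) auto
  have main: "argmins (Fk f m a b (\<gamma> k) (\<delta> k)) \<noteq> {}
                \<and> compact (argmins (Fk f m a b (\<gamma> k) (\<delta> k)))
                \<and> (\<forall>xh\<in>{x. \<forall>i\<in>{1..m}. inner (a i) x - b i \<le> 0}.
                      argmins (Fk f m a b (\<gamma> k) (\<delta> k))
                        \<subseteq> {x. f x \<le> f xh + c / (4 * \<alpha>)})" if k: "k \<ge> 1" for k
  proof -
    define F where "F = Fk f m a b (\<gamma> k) (\<delta> k)"
    have g: "\<gamma> k > 0" and d: "\<delta> k > 0" and gd: "\<gamma> k * \<delta> k \<le> c"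
      using k \<gamma>_pos \<delta>_pos \<gamma>\<delta>_le by auto
    have Ff: "f x \<le> F x" for x
      unfolding F_def Fk_def using g d h_nonneg
      by (intro add_increasing2 mult_nonneg_nonneg sum_nonneg) auto
    have Fc: "continuous_on UNIV F"
      unfolding F_def Fk_def[abs_def] using h_cont[OF d] f_cont a_nz
      by (intro continuous_intros) auto
    have bnd: "F x \<le> f xh + c / (4 * \<alpha>)"
      if xm: "x \<in> argmins F" and xh: "\<forall>i\<in>{1..m}. inner (a i) xh - b i \<le> 0" for x xh
    proof -
      have "(\<Sum>i=1..m. hdelta (\<delta> k) (a i) (b i) xh) \<le> (\<Sum>i=1..m. \<delta> k / (4 * \<alpha>))"
      proof (rule sum_mono)
        fix i assume i: "i \<in> {1..m}"
        have "hdelta (\<delta> k) (a i) (b i) xh \<le> \<delta> k / (4 * norm (a i))"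
          using xh i by (intro h_feas[OF d]) auto
        also have "\<dots> \<le> \<delta> k / (4 * \<alpha>)"
          using \<alpha>_le[OF i] \<alpha>_pos d by (intro divide_left_mono) (auto, smt (verit) mult_pos_pos)
        finally show "hdelta (\<delta> k) (a i) (b i) xh \<le> \<delta> k / (4 * \<alpha>)" .
      qed
      also have "\<dots> = real m * (\<delta> k / (4 * \<alpha>))" by simp
      finally have s: "\<gamma> k / real m * (\<Sum>i=1..m. hdelta (\<delta> k) (a i) (b i) xh)
          \<le> \<gamma> k / real m * (real m * (\<delta> k / (4 * \<alpha>)))"
        using g by (intro mult_left_mono) auto
      have "\<gamma> k / real m * (real m * (\<delta> k / (4 * \<alpha>))) = \<gamma> k * \<delta> k / (4 * \<alpha>)"
        using m_pos by (simp add: field_simps)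
      also have "\<dots> \<le> c / (4 * \<alpha>)" using gd \<alpha>_pos by (intro divide_right_mono) auto
      finally have "F xh \<le> f xh + c / (4 * \<alpha>)" using s unfolding F_def Fk_def by linarith
      moreover have "F x \<le> F xh" using xm unfolding argmins_def by auto
      ultimately show ?thesis by linarith
    qed
    show ?thesis
    proof -
      have inc: "\<forall>xh\<in>{x. \<forall>i\<in>{1..m}. inner (a i) x - b i \<le> 0}.
                      argmins F \<subseteq> {x. f x \<le> f xh + c / (4 * \<alpha>)}"
      proof (intro ballI subsetI)
        fix xh x assume "xh \<in> {x. \<forall>i\<in>{1..m}. inner (a i) x - b i \<le> 0}" "x \<in> argmins F"
        then have "F x \<le> f xh + c / (4 * \<alpha>)" using bnd[of x xh] by simp
        then show "x \<in> {x. f x \<le> f xh + c / (4 * \<alpha>)}" using Ff[of x] by simp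
      qed
      from argmins_good[OF Fc Ff f_lev] have n: "argmins F \<noteq> {}" and cp: "compact (argmins F)"
        by auto
      show ?thesis unfolding F_def[symmetric] by (intro conjI n cp inc)
    qed
  qed
  obtain xh where xh: "xh \<in> {x. \<forall>i\<in>{1..m}. inner (a i) x - b i \<le> 0}" using X_ne by blast
  obtain B where B: "{x. f x \<le> f xh + c / (4 * \<alpha>)} \<subseteq> cball 0 B"
  proof -
    from f_lev[of "f xh + c / (4 * \<alpha>)"] obtain B where "\<forall>x\<in>{x. f x \<le> f xh + c / (4 * \<alpha>)}. norm x \<le> B"
      unfolding bounded_pos by blast
    then have "{x. f x \<le> f xh + c / (4 * \<alpha>)} \<subseteq> cball 0 B" by (auto simp: mem_cball_0)
    then show ?thesis using that by blast
  qed
  have "\<forall>k\<ge>1. argmins (Fk f m a b (\<gamma> k) (\<delta> k)) \<subseteq> cball 0 B"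
  proof (intro allI impI)
    fix k :: nat assume "k \<ge> 1"
    then have "argmins (Fk f m a b (\<gamma> k) (\<delta> k)) \<subseteq> {x. f x \<le> f xh + c / (4 * \<alpha>)}"
      using main[of k] xh by simp
    then show "argmins (Fk f m a b (\<gamma> k) (\<delta> k)) \<subseteq> cball 0 B" using B by (rule order_trans)
  qed
  then have "\<exists>B. \<forall>k\<ge>1. argmins (Fk f m a b (\<gamma> k) (\<delta> k)) \<subseteq> cball 0 B" by (rule exI)
  moreover have "\<forall>k\<ge>1. argmins (Fk f m a b (\<gamma> k) (\<delta> k)) \<noteq> {}
                \<and> compact (argmins (Fk f m a b (\<gamma> k) (\<delta> k)))
                \<and> (\<forall>xh\<in>{x. \<forall>i\<in>{1..m}. inner (a i) x - b i \<le> 0}.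
                      argmins (Fk f m a b (\<gamma> k) (\<delta> k))
                        \<subseteq> {x. f x \<le> f xh + c / (4 * (MIN i\<in>{1..m}. norm (a i)))})"
    using main unfolding \<alpha>_def by (intro allI impI)
  ultimately show ?thesis by (rule conjI[rotated])
qed

end
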